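(* For every $\alpha\in\Lambda$, the $*$-representation $\pi_\alpha$ of $W$ on $H_\alpha$ is irreducible.
   Context: Fix $d\ge 2$ and complex numbers $q_{ij}$, $1\le i\ne j\le d$, with $|q_{ij}|<1$ and $q_{ij}=\overline{q_{ji}}$. Let $W$ be the universal $C^*$-algebra generated by $s_1,\dots,s_d$ subject to $s_i^*s_i=I$ and $s_i^*s_j=q_{ij}s_js_i^*$ for $i\ne j$. Let $\Lambda_m=\{1,\dots,d\}^m$ ($\Lambda_0=\{\emptyset\}$), $\Lambda^0=\bigcup_m\Lambda_m$, $\Lambda=\{1,\dots,d\}^{\mathbb N}$; $s_\alpha=s_{\alpha_1}\cdots s_{\alpha_m}$, $s_\emptyset=I$. Shifts: $\sigma(\beta_1,\beta_2,\dots)=(\beta_2,\dots)$, $\sigma_j(\beta_1,\beta_2,\dots)=(j,\beta_1,\beta_2,\dots)$. $\beta\sim\alpha$ means $\sigma^m(\beta)=\sigma^n(\alpha)$ for some $m,n\ge0$. Fock representation: $\pi_F$ on $\mathcal F$ with unit vector $\Omega$, $\pi_F(s_j)^*\Omega=0$, and $\pi_F(s_\gamma)\Omega$, $\gamma\in\Lambda^0$, spanning a dense subspace. For $\gamma,\beta\in\Lambda_m$, $q(\gamma,\beta)=\langle\pi_F(s_\gamma)^*\pi_F(s_\beta)\Omega,\Omega\rangle$; for infinite $\gamma,\beta$, $q(\gamma,\beta)=\lim_m q((\gamma_1,\dots,\gamma_m),(\beta_1,\dots,\beta_m))$. $H_\alpha$ is the Hilbert space completion of the span of formal vectors $e_\beta$,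 $\beta\sim\alpha$, with respect to the positive form $(e_\beta,e_\gamma)=q(\gamma,\beta)$. The representation $\pi_\alpha$ of $W$ on $H_\alpha$ is given by $\pi_\alpha(s_j)e_\beta=e_{\sigma_j(\beta)}$, and $\pi_\alpha(s_j)^*e_\beta=0$ if $\beta$ does not contain $j$, $\pi_\alpha(s_j)^*e_\beta=q(j,\beta)e_{\beta\setminus j}$ otherwise, where for $\beta=(\beta'j\beta'')$ with $\beta'=(\beta'_1,\dots,\beta'_r)$ not containing $j$, $q(j,\beta)=q_{j\beta'_1}\cdots q_{j\beta'_r}$ and $\beta\setminus j=(\beta'\beta'')$. *)

theory Defs
  imports "HOL-Analysis.Analysis"
begin

definition inf_words :: "nat \<Rightarrow> (nat \<Rightarrow> nat) set" where
  "inf_words d = {\<beta>. \<forall>k. \<beta> k \<in> {1..d}}"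

definition shift :: "(nat \<Rightarrow> nat) \<Rightarrow> (nat \<Rightarrow> nat)" where
  "shift \<beta> = (\<lambda>k. \<beta> (Suc k))"

definition shift_in :: "nat \<Rightarrow> (nat \<Rightarrow> nat) \<Rightarrow> (nat \<Rightarrow> nat)" where
  "shift_in j \<beta> = (\<lambda>k. if k = 0 then j else \<beta> (k - 1))"

definition tail_equiv :: "(nat \<Rightarrow> nat) \<Rightarrow> (nat \<Rightarrow> nat) \<Rightarrow> bool" where
  "tail_equiv \<beta> \<alpha> \<longleftrightarrow> (\<exists>m n. (shift ^^ m) \<beta> = (shift ^^ n) \<alpha>)"

fun qone :: "(nat \<Rightarrow> nat \<Rightarrow> complex) \<Rightarrow> nat \<Rightarrow> nat list \<Rightarrow> complex" where
  "qone qq j [] = 1"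
| "qone qq j (b # \<beta>) = (if b = j then 1 else qq j b * qone qq j \<beta>)"

text \<open>q(\<gamma>,\<beta>) = \<langle>\<pi>_F(s_\<gamma>)^* \<pi>_F(s_\<beta>)\<Omega>,\<Omega>\<rangle> for finite words, as forced by the relations
 s_j^* s_j = I, s_j^* s_b = q_{jb} s_b s_j^* (b \<noteq> j) and s_j^*\<Omega> = 0:
 s_j^* s_\<beta>\<Omega> = q(j,\<beta>) s_{\<beta>\j}\<Omega> if j occurs in \<beta>, and 0 otherwise.\<close>
fun qfin :: "(nat \<Rightarrow> nat \<Rightarrow> complex) \<Rightarrow> nat list \<Rightarrow> nat list \<Rightarrow> complex" where
  "qfin qq [] [] = 1"
| "qfin qq [] (b # \<beta>) = 0"
| "qfin qq (j # \<gamma>) \<beta> =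
     (if j \<in> set \<beta> then qone qq j \<beta> * qfin qq \<gamma> (remove1 j \<beta>) else 0)"

definition prefix :: "nat \<Rightarrow> (nat \<Rightarrow> nat) \<Rightarrow> nat list" where
  "prefix m \<beta> = map \<beta> [0..<m]"

definition qinf :: "(nat \<Rightarrow> nat \<Rightarrow> complex) \<Rightarrow> (nat \<Rightarrow> nat) \<Rightarrow> (nat \<Rightarrow> nat) \<Rightarrow> complex" where
  "qinf qq \<gamma> \<beta> = lim (\<lambda>m. qfin qq (prefix m \<gamma>) (prefix m \<beta>))"

definition contains :: "nat \<Rightarrow> (nat \<Rightarrow> nat) \<Rightarrow> bool" where
  "contains j \<beta> \<longleftrightarrow> (\<exists>k. \<beta> k = j)"

definition first_occ :: "nat \<Rightarrow> (nat \<Rightarrow> nat) \<Rightarrow> nat" where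
  "first_occ j \<beta> = (LEAST k. \<beta> k = j)"

definition qone_inf :: "(nat \<Rightarrow> nat \<Rightarrow> complex) \<Rightarrow> nat \<Rightarrow> (nat \<Rightarrow> nat) \<Rightarrow> complex" where
  "qone_inf qq j \<beta> = (\<Prod>i<first_occ j \<beta>. qq j (\<beta> i))"

definition remove_first :: "nat \<Rightarrow> (nat \<Rightarrow> nat) \<Rightarrow> (nat \<Rightarrow> nat)" where
  "remove_first j \<beta> = (\<lambda>n. if n < first_occ j \<beta> then \<beta> n else \<beta> (Suc n))"

text \<open>A complex Hilbert space is encoded as a real Hilbert space ('h :: {real_inner, complete_space})
together with a real-linear orthogonal map J with J(J x) = -x (multiplication by i).\<close>
definition complex_structure :: "('h::real_inner \<Rightarrow> 'h) \<Rightarrow> bool" where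
  "complex_structure J \<longleftrightarrow> linear J \<and> (\<forall>x. J (J x) = - x) \<and> (\<forall>x y. inner (J x) (J y) = inner x y)"

definition cscale :: "('h::real_vector \<Rightarrow> 'h) \<Rightarrow> complex \<Rightarrow> 'h \<Rightarrow> 'h" where
  "cscale J c x = Re c *\<^sub>R x + Im c *\<^sub>R J x"

text \<open>Complex inner product, linear in the first and conjugate-linear in the second argument.\<close>
definition cinner :: "('h::real_inner \<Rightarrow> 'h) \<Rightarrow> 'h \<Rightarrow> 'h \<Rightarrow> complex" where
  "cinner J x y = Complex (inner x y) (inner x (J y))"

definition closed_csubspace :: "('h::real_inner \<Rightarrow> 'h) \<Rightarrow> 'h set \<Rightarrow> bool" where
  "closed_csubspace J K \<longleftrightarrow> subspace K \<and> closed K \<and> J ` K \<subseteq> K"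

definition bounded_clinear :: "('h::real_inner \<Rightarrow> 'h) \<Rightarrow> ('h \<Rightarrow> 'h) \<Rightarrow> bool" where
  "bounded_clinear J T \<longleftrightarrow> bounded_linear T \<and> (\<forall>x. T (J x) = J (T x))"

definition cspan :: "('h::real_inner \<Rightarrow> 'h) \<Rightarrow> 'h set \<Rightarrow> 'h set" where
  "cspan J A = span (A \<union> J ` A)"

end

theory Submission
  imports Defs
begin


lemma funpow_shift: "(shift ^^ k) b = (\<lambda>i. b (i + k))"
  by (induction k) (auto simp: shift_def)

lemma shift_shift_in[simp]: "shift (shift_in j b) = b"
  by (simp add: shift_def shift_in_def)
lemma shift_in_0[simp]: "shift_in j b 0 = j" by (simp add: shift_in_def)
lemma shift_in_Suc[simp]: "shift_in j b (Suc n) = b n" by (simp add: shift_in_def)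

lemma prefix_0[simp]: "prefix 0 b = []" by (simp add: prefix_def)
lemma prefix_Suc_Cons: "prefix (Suc n) b = b 0 # prefix n (shift b)"
  unfolding prefix_def shift_def by (rule map_upt_Suc)
lemma prefix_shift_in: "prefix (Suc n) (shift_in j b) = j # prefix n b"
  by (simp add: prefix_Suc_Cons)
lemma length_prefix[simp]: "length (prefix m b) = m" by (simp add: prefix_def)

lemma first_occ_prop: "contains j b \<Longrightarrow> b (first_occ j b) = j"
  unfolding contains_def first_occ_def by (rule LeastI_ex)
lemma first_occ_le: "b k = j \<Longrightarrow> first_occ j b \<le> k"
  unfolding first_occ_def by (rule Least_le)
lemma before_first: "i < first_occ j b \<Longrightarrow> b i \<noteq> j"
  unfolding first_occ_def using not_less_Least by blast
lemma first_occ_0: "b 0 = j \<Longrightarrow> first_occ j b = 0"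
  using first_occ_le[of b 0 j] by simp
lemma contains_shift: assumes "contains j b" "b 0 \<noteq> j" shows "contains j (shift b)"
proof -
  obtain k where k: "b k = j" using assms(1) by (auto simp: contains_def)
  then obtain k' where "k = Suc k'" using assms(2) by (cases k) auto
  thus ?thesis using k by (auto simp: contains_def shift_def)
qed
lemma first_occ_Suc: assumes "contains j b" "b 0 \<noteq> j" shows "first_occ j b = Suc (first_occ j (shift b))"
proof -
  obtain k where k: "b k = j" using assms(1) by (auto simp: contains_def)
  show ?thesis unfolding first_occ_def shift_def using Least_Suc[of "\<lambda>k. b k = j" k] k assms(2) by simp
qed
lemma qone_inf_0: "b 0 = j \<Longrightarrow> qone_inf qq j b = 1"
  by (simp add: qone_inf_def first_occ_0)
lemma qone_inf_Suc: "contains j b \<Longrightarrow> b 0 \<noteq> j \<Longrightarrow> qone_inf qq j b = qq j (b 0) * qone_inf qq j (shift b)"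
  using first_occ_Suc[of j b] by (simp add: qone_inf_def prod.lessThan_Suc_shift shift_def del: prod.lessThan_Suc)
lemma remove_first_0: "b 0 = j \<Longrightarrow> remove_first j b = shift b"
  by (simp add: remove_first_def first_occ_0 shift_def)
lemma remove_first_Suc: "contains j b \<Longrightarrow> b 0 \<noteq> j \<Longrightarrow>
   remove_first j b = shift_in (b 0) (remove_first j (shift b))"
  apply (rule ext)
  subgoal for n by (cases n) (auto simp: remove_first_def first_occ_Suc shift_def)
  done

lemma mem_prefix: "j \<in> set (prefix (Suc n) b) \<longleftrightarrow> contains j b \<and> first_occ j b \<le> n"
proof
  assume "j \<in> set (prefix (Suc n) b)"
  then obtain k where "k < Suc n" "b k = j" unfolding prefix_def by (auto simp del: upt_Suc)
  thus "contains j b \<and> first_occ j b \<le> n"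
    using first_occ_le[of b k j] by (auto simp: contains_def)
next
  assume a: "contains j b \<and> first_occ j b \<le> n"
  hence "b (first_occ j b) = j" using first_occ_prop by blast
  moreover have "b (first_occ j b) \<in> b ` {0..<Suc n}" using a by auto
  ultimately show "j \<in> set (prefix (Suc n) b)" unfolding prefix_def by (simp only: set_map set_upt)
qed

lemma qone_prefix: "contains j b \<Longrightarrow> first_occ j b \<le> n \<Longrightarrow>
   qone qq j (prefix (Suc n) b) = qone_inf qq j b"
proof (induction n arbitrary: b)
  case 0
  then have "b 0 = j" using first_occ_prop[OF 0(1)] by simp
  thus ?case by (simp add: prefix_Suc_Cons[of 0] qone_inf_0)
next
  case (Suc n)
  show ?case
  proof (cases "b 0 = j")
    case True thus ?thesis by (simp add: prefix_Suc_Cons[of "Suc n" b] qone_inf_0)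
  next
    case False
    have c: "contains j (shift b)" using contains_shift Suc.prems False by blast
    have "first_occ j (shift b) \<le> n" using first_occ_Suc Suc.prems False by simp
    then have "qone qq j (prefix (Suc n) (shift b)) = qone_inf qq j (shift b)" using Suc.IH[OF c] by blast
    moreover have "qone_inf qq j b = qq j (b 0) * qone_inf qq j (shift b)"
      using qone_inf_Suc[OF Suc.prems(1) False] .
    ultimately show ?thesis using False
      by (simp only: prefix_Suc_Cons[of "Suc n" b] qone.simps if_False)
  qed
qed

lemma remove1_prefix: "contains j b \<Longrightarrow> first_occ j b \<le> n \<Longrightarrow>
   remove1 j (prefix (Suc n) b) = prefix n (remove_first j b)"
proof (induction n arbitrary: b)
  case 0
  then have "b 0 = j" using first_occ_prop[OF 0(1)] by simp
  thus ?case by (simp add: prefix_Suc_Cons[of 0])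
next
  case (Suc n)
  show ?case
  proof (cases "b 0 = j")
    case True thus ?thesis by (simp add: prefix_Suc_Cons[of "Suc n" b] remove_first_0)
  next
    case False
    have c: "contains j (shift b)" using contains_shift Suc.prems False by blast
    have "first_occ j (shift b) \<le> n" using first_occ_Suc Suc.prems False by simp
    then have "remove1 j (prefix (Suc n) (shift b)) = prefix n (remove_first j (shift b))" using Suc.IH[OF c] by blast
    moreover have "remove_first j b = shift_in (b 0) (remove_first j (shift b))"
      using remove_first_Suc[OF Suc.prems(1) False] .
    moreover have F: "(j = b 0) = False" using False by auto
    ultimately show ?thesis
      by (simp only: prefix_Suc_Cons[of "Suc n" b] remove1.simps F if_False prefix_shift_in)
  qed
qed

fun G :: "(nat \<Rightarrow> nat \<Rightarrow> complex) \<Rightarrow> nat list \<Rightarrow> (nat \<Rightarrow> nat) \<Rightarrow> complex" where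
  "G qq [] b = 1"
| "G qq (j # x) b = (if contains j b \<and> first_occ j b \<le> length x
      then qone_inf qq j b * G qq x (remove_first j b) else 0)"

lemma qfin_prefix_G: "qfin qq x (prefix (length x) b) = G qq x b"
proof (induction x arbitrary: b)
  case Nil then show ?case by simp
next
  case (Cons j x)
  show ?case
    using Cons.IH[of "remove_first j b"]
    by (simp add: mem_prefix qone_prefix remove1_prefix)
qed

primrec pb :: "(nat \<Rightarrow> nat) \<Rightarrow> (nat \<Rightarrow> nat) \<Rightarrow> nat \<Rightarrow> (nat \<Rightarrow> nat)" where
  "pb w b 0 = b"
| "pb w b (Suc k) = remove_first (w k) (pb w b k)"

primrec pc :: "(nat \<Rightarrow> nat \<Rightarrow> complex) \<Rightarrow> (nat \<Rightarrow> nat) \<Rightarrow> (nat \<Rightarrow> nat) \<Rightarrow> nat \<Rightarrow> complex" where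
  "pc qq w b 0 = 1"
| "pc qq w b (Suc k) = pc qq w b k *
     (if contains (w k) (pb w b k) then qone_inf qq (w k) (pb w b k) else 0)"

lemma G_process:
  assumes "k \<le> m"
  shows "G qq (map w [k..<m]) (pb w b k) * pc qq w b k =
     (if (\<forall>i. k \<le> i \<and> i < m \<longrightarrow> contains (w i) (pb w b i) \<and> first_occ (w i) (pb w b i) + i < m)
      then pc qq w b m else 0)"
  using assms
proof (induction k rule: inc_induct)
  case base then show ?case by auto
next
  case (step k)
  have map: "map w [k..<m] = w k # map w [Suc k..<m]" using step.hyps by (simp add: upt_conv_Cons)
  have len: "length (map w [Suc k..<m]) = m - Suc k" by simp
  show ?case
  proof (cases "contains (w k) (pb w b k) \<and> first_occ (w k) (pb w b k) + k < m")
    case True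
    have eq: "(\<forall>i. k \<le> i \<and> i < m \<longrightarrow> contains (w i) (pb w b i) \<and> first_occ (w i) (pb w b i) + i < m)
        \<longleftrightarrow> (\<forall>i. Suc k \<le> i \<and> i < m \<longrightarrow> contains (w i) (pb w b i) \<and> first_occ (w i) (pb w b i) + i < m)"
      using True by (metis Suc_leD le_antisym not_less_eq_eq)
    have "first_occ (w k) (pb w b k) \<le> m - Suc k" using True by linarith
    then have g: "G qq (map w [k..<m]) (pb w b k) = qone_inf qq (w k) (pb w b k) * G qq (map w [Suc k..<m]) (pb w b (Suc k))"
      using True by (simp add: map len)
    have p: "pc qq w b (Suc k) = pc qq w b k * qone_inf qq (w k) (pb w b k)" using True by simp
    have "G qq (map w [k..<m]) (pb w b k) * pc qq w b k
        = G qq (map w [Suc k..<m]) (pb w b (Suc k)) * pc qq w b (Suc k)"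
      unfolding g p by (simp add: mult_ac)
    also have "\<dots> = (if (\<forall>i. Suc k \<le> i \<and> i < m \<longrightarrow> contains (w i) (pb w b i) \<and> first_occ (w i) (pb w b i) + i < m)
      then pc qq w b m else 0)" by (rule step.IH)
    finally show ?thesis unfolding eq .
  next
    case False
    then have "G qq (map w [k..<m]) (pb w b k) = 0" using step.hyps by (auto simp: map len)
    moreover have "\<not> (\<forall>i. k \<le> i \<and> i < m \<longrightarrow> contains (w i) (pb w b i) \<and> first_occ (w i) (pb w b i) + i < m)"
      using False step.hyps by auto
    ultimately show ?thesis by (simp only: if_False mult_zero_left)
  qed
qed

lemma qfin_process:
  "qfin qq (prefix m \<gamma>) (prefix m \<beta>) =
    (if (\<forall>i<m. contains (\<gamma> i) (pb \<gamma> \<beta> i) \<and> first_occ (\<gamma> i) (pb \<gamma> \<beta> i) + i < m)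
     then pc qq \<gamma> \<beta> m else 0)"
proof -
  have "qfin qq (prefix m \<gamma>) (prefix m \<beta>) = G qq (map \<gamma> [0..<m]) (pb \<gamma> \<beta> 0) * pc qq \<gamma> \<beta> 0"
    using qfin_prefix_G[of qq "prefix m \<gamma>" \<beta>] by (simp add: prefix_def)
  also have "\<dots> = (if (\<forall>i. 0 \<le> i \<and> i < m \<longrightarrow> contains (\<gamma> i) (pb \<gamma> \<beta> i) \<and> first_occ (\<gamma> i) (pb \<gamma> \<beta> i) + i < m)
      then pc qq \<gamma> \<beta> m else 0)" by (rule G_process) simp
  finally show ?thesis by simp
qed

lemma qfin_refl: "qfin qq l l = 1"
  by (induction l) auto



lemma inf_words_remove_first: "b \<in> inf_words d \<Longrightarrow> remove_first j b \<in> inf_words d"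
  by (auto simp: inf_words_def remove_first_def)
lemma inf_words_shift_in: "j \<in> {1..d} \<Longrightarrow> b \<in> inf_words d \<Longrightarrow> shift_in j b \<in> inf_words d"
  by (auto simp: inf_words_def shift_in_def)
lemma inf_words_shift: "b \<in> inf_words d \<Longrightarrow> shift b \<in> inf_words d"
  by (auto simp: inf_words_def shift_def)
lemma inf_words_funpow: "b \<in> inf_words d \<Longrightarrow> (shift ^^ n) b \<in> inf_words d"
  by (auto simp: inf_words_def funpow_shift)
lemma inf_words_pb: "b \<in> inf_words d \<Longrightarrow> pb w b k \<in> inf_words d"
  by (induction k) (auto simp: inf_words_remove_first)

locale qp =
  fixes d :: nat and qq :: "nat \<Rightarrow> nat \<Rightarrow> complex"
  assumes d2: "d \<ge> 2"
    and q_small: "\<And>i j. i \<in> {1..d} \<Longrightarrow> j \<in> {1..d} \<Longrightarrow> i \<noteq> j \<Longrightarrow> cmod (qq i j) < 1"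
begin

definition qset where "qset = (\<lambda>(i,j). cmod (qq i j)) ` {(i,j). i \<in> {1..d} \<and> j \<in> {1..d} \<and> i \<noteq> j}"
definition qmax where "qmax = Max qset"

lemma qset_fin: "finite qset"
proof -
  have "{(i,j). i \<in> {1..d} \<and> j \<in> {1..d} \<and> i \<noteq> j} \<subseteq> {1..d} \<times> {1..d}" by auto
  then have "finite {(i,j). i \<in> {1..d} \<and> j \<in> {1..d} \<and> i \<noteq> j}"
    using finite_subset by blast
  thus ?thesis unfolding qset_def by simp
qed

lemma qset_ne: "cmod (qq 1 2) \<in> qset"
  unfolding qset_def using d2 by (auto intro!: image_eqI[where x="(1,2)"])

lemma qmax_ge: "i \<in> {1..d} \<Longrightarrow> j \<in> {1..d} \<Longrightarrow> i \<noteq> j \<Longrightarrow> cmod (qq i j) \<le> qmax"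
  unfolding qmax_def using qset_fin by (intro Max_ge) (auto simp: qset_def)

lemma qmax_lt1: "qmax < 1"
proof -
  have "qset \<noteq> {}" using qset_ne by auto
  moreover have "\<forall>x\<in>qset. x < 1" unfolding qset_def using q_small by auto
  ultimately show ?thesis unfolding qmax_def using qset_fin by (simp add: Max_less_iff)
qed

lemma qmax_nonneg: "0 \<le> qmax"
proof -
  have "cmod (qq 1 2) \<le> qmax" using d2 by (intro qmax_ge) auto
  thus ?thesis using norm_ge_zero order_trans by blast
qed

lemma qone_inf_bound:
  assumes "j \<in> {1..d}" "b \<in> inf_words d"
  shows "cmod (qone_inf qq j b) \<le> qmax ^ first_occ j b"
proof -
  have "cmod (qone_inf qq j b) = (\<Prod>i<first_occ j b. cmod (qq j (b i)))"
    by (simp add: qone_inf_def prod_norm)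
  also have "\<dots> \<le> (\<Prod>i<first_occ j b. qmax)"
  proof (rule prod_mono)
    fix i assume "i \<in> {..<first_occ j b}"
    then have "b i \<noteq> j" using before_first by auto
    moreover have "b i \<in> {1..d}" using assms(2) by (auto simp: inf_words_def)
    ultimately show "0 \<le> cmod (qq j (b i)) \<and> cmod (qq j (b i)) \<le> qmax"
      using qmax_ge[of j "b i"] assms(1) by auto
  qed
  also have "\<dots> = qmax ^ first_occ j b" by simp
  finally show ?thesis .
qed

lemma qone_inf_le1: "j \<in> {1..d} \<Longrightarrow> b \<in> inf_words d \<Longrightarrow> cmod (qone_inf qq j b) \<le> 1"
proof -
  assume a: "j \<in> {1..d}" "b \<in> inf_words d"
  have "qmax ^ first_occ j b \<le> 1" using qmax_nonneg qmax_lt1 by (intro power_le_one) auto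
  thus ?thesis using qone_inf_bound[OF a] by linarith
qed

lemma qone_inf_le_qmax: "j \<in> {1..d} \<Longrightarrow> b \<in> inf_words d \<Longrightarrow> first_occ j b > 0 \<Longrightarrow>
    cmod (qone_inf qq j b) \<le> qmax"
proof -
  assume a: "j \<in> {1..d}" "b \<in> inf_words d" "first_occ j b > 0"
  have "qmax ^ first_occ j b \<le> qmax ^ 1"
    using a(3) qmax_nonneg qmax_lt1 by (intro power_decreasing) auto
  thus ?thesis using qone_inf_bound[OF a(1,2)] by simp
qed

lemma pc_step_le:
  assumes "w \<in> inf_words d" "b \<in> inf_words d"
  shows "cmod (pc qq w b (Suc k)) \<le> cmod (pc qq w b k)"
proof -
  have "w k \<in> {1..d}" using assms(1) by (auto simp: inf_words_def)
  then have "cmod (if contains (w k) (pb w b k) then qone_inf qq (w k) (pb w b k) else 0) \<le> 1"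
    using qone_inf_le1 inf_words_pb[OF assms(2)] by auto
  then have "cmod (pc qq w b k) * cmod (if contains (w k) (pb w b k) then qone_inf qq (w k) (pb w b k) else 0) \<le> cmod (pc qq w b k) * 1"
    by (intro mult_left_mono) auto
  then show ?thesis by (simp only: pc.simps norm_mult mult_1_right)
qed

lemma pc_pass_le:
  assumes "w \<in> inf_words d" "b \<in> inf_words d"
    and "\<not> contains (w k) (pb w b k) \<or> first_occ (w k) (pb w b k) > 0"
  shows "cmod (pc qq w b (Suc k)) \<le> qmax * cmod (pc qq w b k)"
proof -
  have "w k \<in> {1..d}" using assms(1) by (auto simp: inf_words_def)
  then have "cmod (if contains (w k) (pb w b k) then qone_inf qq (w k) (pb w b k) else 0) \<le> qmax"
    using qone_inf_le_qmax inf_words_pb[OF assms(2)] assms(3) qmax_nonneg by auto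
  then have "cmod (pc qq w b k) * cmod (if contains (w k) (pb w b k) then qone_inf qq (w k) (pb w b k) else 0) \<le> cmod (pc qq w b k) * qmax"
    by (intro mult_left_mono) auto
  then show ?thesis by (simp only: pc.simps norm_mult mult.commute)
qed

lemma pc_antimono:
  assumes "w \<in> inf_words d" "b \<in> inf_words d" "k \<le> m"
  shows "cmod (pc qq w b m) \<le> cmod (pc qq w b k)"
  using assms(3)
proof (induction m rule: dec_induct)
  case base then show ?case by simp
next
  case (step m) then show ?case using pc_step_le[OF assms(1,2), of m] by linarith
qed

lemma passes_to_zero:
  assumes "w \<in> inf_words d" "b \<in> inf_words d"
    and pass: "\<forall>N. \<exists>k\<ge>N. \<not> contains (w k) (pb w b k) \<or> first_occ (w k) (pb w b k) > 0"
  shows "pc qq w b \<longlonglongrightarrow> 0"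
proof -
  have ex: "\<exists>m. cmod (pc qq w b m) \<le> qmax ^ p" for p
  proof (induction p)
    case 0 show ?case by (rule exI[of _ 0]) simp
  next
    case (Suc p)
    then obtain m where m: "cmod (pc qq w b m) \<le> qmax ^ p" by blast
    obtain k where k: "k \<ge> m" "\<not> contains (w k) (pb w b k) \<or> first_occ (w k) (pb w b k) > 0"
      using pass by blast
    have "cmod (pc qq w b (Suc k)) \<le> qmax * cmod (pc qq w b k)" by (rule pc_pass_le[OF assms(1,2) k(2)])
    also have "\<dots> \<le> qmax * cmod (pc qq w b m)"
      using pc_antimono[OF assms(1,2) k(1)] qmax_nonneg by (simp add: mult_left_mono)
    also have "\<dots> \<le> qmax * qmax ^ p" using m qmax_nonneg by (simp add: mult_left_mono)
    finally have "cmod (pc qq w b (Suc k)) \<le> qmax ^ Suc p" by (simp only: power_Suc)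
    thus ?case by blast
  qed
  show ?thesis
  proof (rule LIMSEQ_I)
    fix r :: real assume r: "0 < r"
    have "(\<lambda>n. qmax ^ n) \<longlonglongrightarrow> 0" using qmax_nonneg qmax_lt1 by (rule LIMSEQ_realpow_zero)
    then have "eventually (\<lambda>n. qmax ^ n < r) sequentially" using order_tendstoD(2) r by blast
    then obtain p where p: "qmax ^ p < r" by (auto simp: eventually_sequentially)
    obtain m where m: "cmod (pc qq w b m) \<le> qmax ^ p" using ex by blast
    show "\<exists>no. \<forall>n\<ge>no. norm (pc qq w b n - 0) < r"
    proof (intro exI allI impI)
      fix n assume "m \<le> n"
      then have "cmod (pc qq w b n) \<le> cmod (pc qq w b m)" by (rule pc_antimono[OF assms(1,2)])
      then show "norm (pc qq w b n - 0) < r" using m p by simp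
    qed
  qed
qed

lemma no_pass:
  assumes np: "\<forall>k\<ge>N. contains (w k) (pb w b k) \<and> first_occ (w k) (pb w b k) = 0"
  shows "pb w b N = (shift ^^ N) w" and "\<forall>k\<ge>N. pc qq w b k = pc qq w b N"
proof -
  have head: "w k = pb w b k 0" if "k \<ge> N" for k
  proof -
    have c: "contains (w k) (pb w b k)" and z: "first_occ (w k) (pb w b k) = 0" using np that by auto
    from first_occ_prop[OF c] z show ?thesis by simp
  qed
  have pbi: "pb w b (N + i) = (shift ^^ i) (pb w b N)" for i
  proof (induction i)
    case 0 show ?case by simp
  next
    case (Suc i)
    have "pb w b (N + Suc i) = remove_first (w (N + i)) (pb w b (N + i))" by simp
    also have "\<dots> = shift (pb w b (N + i))" using head[of "N+i"] by (simp add: remove_first_0)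
    finally show ?case using Suc by simp
  qed
  have "pb w b N i = w (i + N)" for i
    using head[of "N + i"] pbi[of i] by (simp add: funpow_shift add.commute)
  then show "pb w b N = (shift ^^ N) w" by (auto simp: funpow_shift)
  have "pc qq w b (N + i) = pc qq w b N" for i
  proof (induction i)
    case 0 show ?case by simp
  next
    case (Suc i)
    have "qone_inf qq (w (N+i)) (pb w b (N+i)) = 1"
      using head[of "N+i"] by (simp add: qone_inf_0)
    then show ?case using Suc np by simp
  qed
  then show "\<forall>k\<ge>N. pc qq w b k = pc qq w b N"
  proof (intro allI impI)
    fix k assume "N \<le> k"
    then obtain i where "k = N + i" using le_Suc_ex by blast
    then show "pc qq w b k = pc qq w b N" using \<open>\<And>i. pc qq w b (N + i) = pc qq w b N\<close> by simp
  qed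
qed

lemma dichotomy:
  assumes "w \<in> inf_words d" "b \<in> inf_words d"
  shows "(\<exists>N. pb w b N = (shift ^^ N) w \<and> (\<forall>k\<ge>N. pc qq w b k = pc qq w b N)
              \<and> (\<forall>k\<ge>N. contains (w k) (pb w b k) \<and> first_occ (w k) (pb w b k) = 0))
         \<or> pc qq w b \<longlonglongrightarrow> 0"
proof (cases "\<forall>N. \<exists>k\<ge>N. \<not> contains (w k) (pb w b k) \<or> first_occ (w k) (pb w b k) > 0")
  case True then show ?thesis using passes_to_zero[OF assms] by blast
next
  case False
  then obtain N where "\<forall>k\<ge>N. contains (w k) (pb w b k) \<and> first_occ (w k) (pb w b k) = 0" by auto
  then show ?thesis using no_pass by blast
qed

lemma qfin_conv:
  assumes g: "\<gamma> \<in> inf_words d" and b: "\<beta> \<in> inf_words d"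
  shows "convergent (\<lambda>m. qfin qq (prefix m \<gamma>) (prefix m \<beta>))"
proof -
  let ?ok = "\<lambda>m. \<forall>i<m. contains (\<gamma> i) (pb \<gamma> \<beta> i) \<and> first_occ (\<gamma> i) (pb \<gamma> \<beta> i) + i < m"
  let ?f = "\<lambda>m. qfin qq (prefix m \<gamma>) (prefix m \<beta>)"
  have f: "?f m = (if ?ok m then pc qq \<gamma> \<beta> m else 0)" for m by (rule qfin_process)
  have fle: "norm (?f m) \<le> cmod (pc qq \<gamma> \<beta> m)" for m
  proof (cases "?ok m")
    case True
    then have "?f m = pc qq \<gamma> \<beta> m" by (rule trans[OF f[of m] if_P])
    thus ?thesis by simp
  next
    case False
    then have "?f m = 0" by (rule trans[OF f[of m] if_not_P])
    thus ?thesis by simp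
  qed
  show ?thesis
  proof (cases "\<exists>i. \<not> contains (\<gamma> i) (pb \<gamma> \<beta> i)")
    case True
    then obtain i where i: "\<not> contains (\<gamma> i) (pb \<gamma> \<beta> i)" by blast
    have "?f m = 0" if "m \<ge> Suc i" for m
    proof -
      have "cmod (pc qq \<gamma> \<beta> m) \<le> cmod (pc qq \<gamma> \<beta> (Suc i))" by (rule pc_antimono[OF g b that])
      also have "pc qq \<gamma> \<beta> (Suc i) = 0" using i by simp
      finally show ?thesis using fle[of m] by simp
    qed
    then have "eventually (\<lambda>m. ?f m = 0) sequentially" unfolding eventually_sequentially by blast
    then have "?f \<longlonglongrightarrow> 0" by (rule tendsto_eventually)
    then show ?thesis by (auto simp: convergent_def)
  next
    case False
    then have allc: "\<forall>i. contains (\<gamma> i) (pb \<gamma> \<beta> i)" by blast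
    from dichotomy[OF g b] show ?thesis
    proof
      assume "pc qq \<gamma> \<beta> \<longlonglongrightarrow> 0"
      then have "(\<lambda>m. cmod (pc qq \<gamma> \<beta> m)) \<longlonglongrightarrow> 0" by (simp add: tendsto_norm_zero)
      then have "?f \<longlonglongrightarrow> 0" by (rule Lim_null_comparison[rotated]) (simp add: fle)
      then show ?thesis by (auto simp: convergent_def)
    next
      assume "\<exists>N. pb \<gamma> \<beta> N = (shift ^^ N) \<gamma> \<and> (\<forall>k\<ge>N. pc qq \<gamma> \<beta> k = pc qq \<gamma> \<beta> N)
              \<and> (\<forall>k\<ge>N. contains (\<gamma> k) (pb \<gamma> \<beta> k) \<and> first_occ (\<gamma> k) (pb \<gamma> \<beta> k) = 0)"
      then obtain N where N: "\<forall>k\<ge>N. pc qq \<gamma> \<beta> k = pc qq \<gamma> \<beta> N"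
         "\<forall>k\<ge>N. first_occ (\<gamma> k) (pb \<gamma> \<beta> k) = 0" by blast
      define B where "B = N + Suc (\<Sum>i<N. first_occ (\<gamma> i) (pb \<gamma> \<beta> i) + i)"
      have "?f m = pc qq \<gamma> \<beta> N" if "m \<ge> B" for m
      proof -
        have "?ok m"
        proof (intro allI impI conjI)
          fix i assume i: "i < m"
          show "contains (\<gamma> i) (pb \<gamma> \<beta> i)" using allc by blast
          show "first_occ (\<gamma> i) (pb \<gamma> \<beta> i) + i < m"
          proof (cases "i < N")
            case True
            have "first_occ (\<gamma> i) (pb \<gamma> \<beta> i) + i \<le> (\<Sum>i<N. first_occ (\<gamma> i) (pb \<gamma> \<beta> i) + i)"
              using True by (intro member_le_sum) auto
            then show ?thesis using that unfolding B_def by linarith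
          next
            case False then show ?thesis using N(2) i by simp
          qed
        qed
        moreover have "m \<ge> N" using that unfolding B_def by linarith
        ultimately show ?thesis using trans[OF f[of m] if_P] N(1) by metis
      qed
      then have "eventually (\<lambda>m. ?f m = pc qq \<gamma> \<beta> N) sequentially" unfolding eventually_sequentially by blast
      then have "?f \<longlonglongrightarrow> pc qq \<gamma> \<beta> N" by (rule tendsto_eventually)
      then show ?thesis by (auto simp: convergent_def)
    qed
  qed
qed

lemma qinf_self: "qinf qq b b = 1"
  unfolding qinf_def by (simp add: qfin_refl)

lemma qinf_shift_in:
  assumes g: "\<gamma> \<in> inf_words d" and b: "\<beta> \<in> inf_words d"
  shows "qinf qq (shift_in j \<gamma>) \<beta> =
     (if contains j \<beta> then qone_inf qq j \<beta> * qinf qq \<gamma> (remove_first j \<beta>) else 0)"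
proof -
  let ?f = "\<lambda>m. qfin qq (prefix m (shift_in j \<gamma>)) (prefix m \<beta>)"
  have fS: "?f (Suc m) = (if j \<in> set (prefix (Suc m) \<beta>) then qone qq j (prefix (Suc m) \<beta>) *
        qfin qq (prefix m \<gamma>) (remove1 j (prefix (Suc m) \<beta>)) else 0)" for m
    by (simp only: prefix_shift_in qfin.simps)
  show ?thesis
  proof (cases "contains j \<beta>")
    case True
    let ?g = "\<lambda>m. qfin qq (prefix m \<gamma>) (prefix m (remove_first j \<beta>))"
    have conv: "convergent ?g" by (rule qfin_conv[OF g inf_words_remove_first[OF b]])
    have ev: "?f (Suc m) = qone_inf qq j \<beta> * ?g m" if "m \<ge> first_occ j \<beta>" for m
      using fS[of m] True that by (simp add: mem_prefix qone_prefix remove1_prefix)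
    have "(\<lambda>m. qone_inf qq j \<beta> * ?g m) \<longlonglongrightarrow> qone_inf qq j \<beta> * lim ?g"
      using conv by (intro tendsto_mult_left) (simp add: convergent_LIMSEQ_iff)
    moreover have "eventually (\<lambda>m. qone_inf qq j \<beta> * ?g m = ?f (Suc m)) sequentially"
      unfolding eventually_sequentially by (intro exI[of _ "first_occ j \<beta>"]) (simp add: ev)
    ultimately have "(\<lambda>m. ?f (Suc m)) \<longlonglongrightarrow> qone_inf qq j \<beta> * lim ?g"
      by (rule Lim_transform_eventually)
    then have "?f \<longlonglongrightarrow> qone_inf qq j \<beta> * lim ?g" by (rule LIMSEQ_imp_Suc)
    then show ?thesis using True unfolding qinf_def by (simp add: limI)
  next
    case False
    then have "?f (Suc m) = 0" for m using fS[of m] by (simp add: mem_prefix)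
    then have "(\<lambda>m. ?f (Suc m)) \<longlonglongrightarrow> 0" by simp
    then have "?f \<longlonglongrightarrow> 0" by (rule LIMSEQ_imp_Suc)
    then show ?thesis using False unfolding qinf_def by (simp add: limI)
  qed
qed

end



lemma proj_exists:
  fixes K :: "'a::{real_inner,complete_space} set"
  assumes sub: "subspace K" and cl: "closed K"
  shows "\<exists>a\<in>K. \<forall>k\<in>K. inner (v - a) k = 0"
proof -
  define \<delta> where "\<delta> = infdist v K"
  have K0: "0 \<in> K" using sub by (simp add: subspace_0)
  have Kne: "K \<noteq> {}" using K0 by auto
  have d0: "0 \<le> \<delta>" unfolding \<delta>_def by (rule infdist_nonneg)
  have dle: "\<delta> \<le> norm (v - k)" if "k \<in> K" for k
    using infdist_le[OF that, of v] unfolding \<delta>_def by (simp add: dist_norm)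
  have "\<exists>k\<in>K. norm (v - k) < \<delta> + inverse (real (Suc n))" for n
  proof -
    have "(INF a\<in>K. dist v a) < \<delta> + inverse (real (Suc n))"
      using infdist_notempty[OF Kne, of v] unfolding \<delta>_def by simp
    then obtain a where "a \<in> K" "dist v a < \<delta> + inverse (real (Suc n))"
      using cINF_less_iff[OF Kne, of "dist v"] by auto
    thus ?thesis by (auto simp: dist_norm)
  qed
  then obtain k where kK: "\<And>n. k n \<in> K" and kd: "\<And>n. norm (v - k n) < \<delta> + inverse (real (Suc n))"
    by metis
  define \<epsilon> where "\<epsilon> n = inverse (real (Suc n))" for n
  have e0: "0 < \<epsilon> n" "\<epsilon> n \<le> 1" for n unfolding \<epsilon>_def by (auto simp: field_simps)
  have bound: "norm (k m - k n) ^ 2 \<le> (4 * \<delta> + 2) * (\<epsilon> m + \<epsilon> n)" for m n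
  proof -
    let ?x = "v - k m" and ?y = "v - k n"
    have par: "norm (?x - ?y) ^ 2 + norm (?x + ?y) ^ 2 = 2 * norm ?x ^ 2 + 2 * norm ?y ^ 2"
      by (simp add: power2_norm_eq_inner inner_add_left inner_add_right inner_diff_left inner_diff_right inner_commute)
    have mid: "(1/2) *\<^sub>R (k m + k n) \<in> K" using kK sub
      by (simp add: subspace_add subspace_scale)
    have "?x + ?y = 2 *\<^sub>R (v - (1/2) *\<^sub>R (k m + k n))" by (simp add: algebra_simps scaleR_2)
    then have "norm (?x + ?y) = 2 * norm (v - (1/2) *\<^sub>R (k m + k n))" by simp
    then have "norm (?x + ?y) \<ge> 2 * \<delta>" using dle[OF mid] by simp
    then have "(2 * \<delta>) ^ 2 \<le> norm (?x + ?y) ^ 2" using d0 by (intro power_mono) auto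
    then have s: "norm (?x + ?y) ^ 2 \<ge> 4 * \<delta>^2" by (simp add: power_mult_distrib)
    have xm: "norm ?x ^ 2 \<le> (\<delta> + \<epsilon> m) ^ 2" using kd[of m] unfolding \<epsilon>_def
      by (intro power_mono) auto
    have yn: "norm ?y ^ 2 \<le> (\<delta> + \<epsilon> n) ^ 2" using kd[of n] unfolding \<epsilon>_def
      by (intro power_mono) auto
    have "?x - ?y = k n - k m" by simp
    then have "norm (k m - k n) ^ 2 = norm (?x - ?y) ^ 2" by (simp add: norm_minus_commute)
    then have "norm (k m - k n) ^ 2 \<le> 2 * (\<delta> + \<epsilon> m) ^ 2 + 2 * (\<delta> + \<epsilon> n) ^ 2 - 4 * \<delta>^2"
      using par s xm yn by linarith
    also have "\<dots> = 4 * \<delta> * (\<epsilon> m + \<epsilon> n) + 2 * \<epsilon> m * \<epsilon> m + 2 * \<epsilon> n * \<epsilon> n"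
      by (simp add: power2_eq_square algebra_simps)
    also have "\<dots> \<le> (4 * \<delta> + 2) * (\<epsilon> m + \<epsilon> n)"
    proof -
      have "\<epsilon> m * \<epsilon> m \<le> \<epsilon> m" using e0[of m] by (simp add: mult_le_cancel_left1)
      moreover have "\<epsilon> n * \<epsilon> n \<le> \<epsilon> n" using e0[of n] by (simp add: mult_le_cancel_left1)
      ultimately show ?thesis by (simp add: algebra_simps)
    qed
    finally show ?thesis .
  qed
  have "Cauchy k"
  proof (rule CauchyI)
    fix r :: real assume r: "0 < r"
    obtain M where M: "2 * (4 * \<delta> + 2) / r^2 < real M" using reals_Archimedean2 by blast
    show "\<exists>M. \<forall>m\<ge>M. \<forall>n\<ge>M. norm (k m - k n) < r"
    proof (intro exI allI impI)
      fix m n assume mn: "M \<le> m" "M \<le> n"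
      have em: "\<epsilon> m \<le> inverse (real (Suc M))" "\<epsilon> n \<le> inverse (real (Suc M))"
        using mn unfolding \<epsilon>_def by (auto intro!: le_imp_inverse_le)
      have "(4 * \<delta> + 2) * (\<epsilon> m + \<epsilon> n) \<le> (4 * \<delta> + 2) * (2 * inverse (real (Suc M)))"
        using em d0 by (intro mult_left_mono) auto
      then have "norm (k m - k n) ^ 2 \<le> (4 * \<delta> + 2) * (2 * inverse (real (Suc M)))"
        using bound[of m n] by linarith
      also have "\<dots> < r ^ 2"
      proof -
        have r2: "0 < r^2" using r by simp
        have "2 * (4 * \<delta> + 2) < real M * r^2" using M r2 by (simp add: pos_divide_less_eq)
        also have "\<dots> \<le> real (Suc M) * r^2" using r2 by (intro mult_right_mono) auto
        finally have "2 * (4 * \<delta> + 2) < r^2 * real (Suc M)" by (simp add: mult.commute)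
        thus ?thesis by (simp add: field_simps)
      qed
      finally have "norm (k m - k n) ^ 2 < r ^ 2" .
      thus "norm (k m - k n) < r" using r by (simp add: power_less_imp_less_base)
    qed
  qed
  then obtain a where ka: "k \<longlonglongrightarrow> a" using Cauchy_convergent convergent_def by blast
  have aK: "a \<in> K" using closed_sequentially[OF cl kK ka] .
  have "norm (v - a) \<le> \<delta>"
  proof -
    have "(\<lambda>n. norm (v - k n)) \<longlonglongrightarrow> norm (v - a)"
      by (intro tendsto_norm tendsto_diff tendsto_const ka)
    moreover have "(\<lambda>n. \<delta> + inverse (real (Suc n))) \<longlonglongrightarrow> \<delta>"
      by (rule LIMSEQ_inverse_real_of_nat_add)
    ultimately show ?thesis using kd by (intro LIMSEQ_le) (auto intro: less_imp_le)
  qed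
  have orth: "inner (v - a) c = 0" if cK: "c \<in> K" for c
  proof -
    define w where "w = v - a"
    define x where "x = inner w c"
    define s where "s = inner c c"
    define t where "t = x / (s + 1)"
    have s0: "0 \<le> s" unfolding s_def by simp
    have "a + t *\<^sub>R c \<in> K" using sub aK cK by (simp add: subspace_add subspace_scale)
    then have "\<delta> \<le> norm (v - (a + t *\<^sub>R c))" by (rule dle)
    moreover have "v - (a + t *\<^sub>R c) = w - t *\<^sub>R c" unfolding w_def by simp
    ultimately have "norm w \<le> norm (w - t *\<^sub>R c)"
      using \<open>norm (v - a) \<le> \<delta>\<close> unfolding w_def by simp
    then have "norm w ^ 2 \<le> norm (w - t *\<^sub>R c) ^ 2" by (simp add: power_mono)
    also have "norm (w - t *\<^sub>R c) ^ 2 = norm w ^ 2 - 2 * t * x + t^2 * s"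
      unfolding power2_norm_eq_inner x_def s_def by (simp add: inner_diff_left inner_diff_right inner_commute power2_eq_square algebra_simps)
    finally have "2 * t * x \<le> t^2 * s" by simp
    then have "(s+1)^2 * (2 * t * x) \<le> (s+1)^2 * (t^2 * s)" by (intro mult_left_mono) auto
    moreover have "(s+1)^2 * (2 * t * x) = 2 * x * x * (s + 1)"
      unfolding t_def using s0 by (simp add: power2_eq_square field_simps)
    moreover have "(s+1)^2 * (t^2 * s) = x * x * s"
    proof -
      have sp: "(s+1)^2 \<noteq> 0" using s0 by simp
      have "(s+1)^2 * (t^2 * s) = (s+1)^2 * (x^2 / (s+1)^2) * s" unfolding t_def by (simp add: power_divide)
      also have "\<dots> = x^2 * s" using sp by simp
      finally show ?thesis by (simp add: power2_eq_square)
    qed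
    ultimately have "2 * x * x * (s + 1) \<le> x * x * s" by simp
    then have "x * x * (s + 2) \<le> 0" by (simp add: algebra_simps)
    moreover have "0 \<le> x * x" by simp
    moreover have "0 \<le> x * x * (s + 2)" using s0 by simp
    ultimately have "x * x * (s + 2) = 0" by linarith
    then have "x * x = 0" using s0 by simp
    thus ?thesis unfolding x_def w_def by simp
  qed
  show ?thesis using aK orth by blast
qed



lemma eq_closed_subspace:
  fixes f g :: "'a::real_normed_vector \<Rightarrow> real"
  assumes f: "bounded_linear f" and g: "bounded_linear g"
  shows "subspace {y. f y = g y}" "closed {y. f y = g y}"
proof -
  interpret f: bounded_linear f by (rule f)
  interpret g: bounded_linear g by (rule g)
  show "subspace {y. f y = g y}"
    unfolding subspace_def by (simp add: f.add g.add f.scale g.scale)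
  show "closed {y. f y = g y}"
    by (intro closed_Collect_eq linear_continuous_on f g)
qed

lemma tail_equiv_iff: "tail_equiv \<beta> \<gamma> \<longleftrightarrow> (\<exists>m n. \<forall>i. \<beta> (i + m) = \<gamma> (i + n))"
  unfolding tail_equiv_def funpow_shift by (simp add: fun_eq_iff)

locale H = qp d qq for d qq +
  fixes \<alpha> :: "nat \<Rightarrow> nat" and J :: "'h::{real_inner,complete_space} \<Rightarrow> 'h"
    and e :: "(nat \<Rightarrow> nat) \<Rightarrow> 'h" and S T :: "nat \<Rightarrow> 'h \<Rightarrow> 'h"
  assumes \<alpha>: "\<alpha> \<in> inf_words d"
    and J: "complex_structure J"
    and e_inner: "\<And>\<beta> \<gamma>. \<beta> \<in> inf_words d \<Longrightarrow> tail_equiv \<beta> \<alpha> \<Longrightarrow>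
                    \<gamma> \<in> inf_words d \<Longrightarrow> tail_equiv \<gamma> \<alpha> \<Longrightarrow>
                    cinner J (e \<beta>) (e \<gamma>) = qinf qq \<gamma> \<beta>"
    and e_dense: "closure (cspan J (e ` {\<beta> \<in> inf_words d. tail_equiv \<beta> \<alpha>})) = UNIV"
    and S_lin: "\<And>j. j \<in> {1..d} \<Longrightarrow> bounded_clinear J (S j)"
    and T_lin: "\<And>j. j \<in> {1..d} \<Longrightarrow> bounded_clinear J (T j)"
    and S_e: "\<And>j \<beta>. j \<in> {1..d} \<Longrightarrow> \<beta> \<in> inf_words d \<Longrightarrow> tail_equiv \<beta> \<alpha> \<Longrightarrow>
                S j (e \<beta>) = e (shift_in j \<beta>)"
    and T_e: "\<And>j \<beta>. j \<in> {1..d} \<Longrightarrow> \<beta> \<in> inf_words d \<Longrightarrow> tail_equiv \<beta> \<alpha> \<Longrightarrow>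
                T j (e \<beta>) = (if contains j \<beta>
                              then cscale J (qone_inf qq j \<beta>) (e (remove_first j \<beta>))
                              else 0)"
begin

definition Orb where "Orb = {\<beta> \<in> inf_words d. tail_equiv \<beta> \<alpha>}"

section \<open>Complex structure\<close>

lemma J_linear: "linear J" using J by (simp add: complex_structure_def)
lemma JJ[simp]: "J (J x) = - x" using J by (simp add: complex_structure_def)
lemma J_inner[simp]: "inner (J x) (J y) = inner x y" using J by (simp add: complex_structure_def)
lemma J_add: "J (x + y) = J x + J y" using J_linear by (rule linear_add)
lemma J_scale: "J (r *\<^sub>R x) = r *\<^sub>R J x" using J_linear by (rule linear_cmul)
lemma J_diff: "J (x - y) = J x - J y" using J_linear by (rule linear_diff)
lemma J_zero[simp]: "J 0 = 0" using J_linear by (rule linear_0)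
lemma J_inner_left: "inner (J x) y = - inner x (J y)"
proof -
  have "inner (J x) y = inner (J (J x)) (J y)" by (rule J_inner[symmetric])
  also have "\<dots> = - inner x (J y)" by simp
  finally show ?thesis .
qed
lemma J_self[simp]: "inner x (J x) = 0"
  using J_inner_left[of x x] by (simp add: inner_commute)
lemma norm_J[simp]: "norm (J x) = norm x"
  by (simp add: norm_eq_sqrt_inner)

lemma cinner_Re[simp]: "Re (cinner J x y) = inner x y" by (simp add: cinner_def)
lemma cinner_Im[simp]: "Im (cinner J x y) = inner x (J y)" by (simp add: cinner_def)

lemma cinner_cscale_left: "cinner J (cscale J c x) y = c * cinner J x y"
  by (simp add: complex_eq_iff cscale_def inner_add_left J_inner_left)

lemma cinner_cscale_right: "cinner J x (cscale J c y) = cnj c * cinner J x y"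
  by (simp add: complex_eq_iff cscale_def inner_add_right inner_diff_right J_add J_scale)

lemma cinner_diff_left: "cinner J (x - y) z = cinner J x z - cinner J y z"
  by (simp add: complex_eq_iff inner_diff_left)

lemma cinner_zero_left[simp]: "cinner J 0 z = 0"
  by (simp add: complex_eq_iff)

lemma cmod_cinner: "cmod (cinner J x y) \<le> 2 * norm x * norm y"
proof -
  have "cmod (cinner J x y) \<le> \<bar>inner x y\<bar> + \<bar>inner x (J y)\<bar>" using cmod_le[of "cinner J x y"] by simp
  also have "\<dots> \<le> norm x * norm y + norm x * norm (J y)"
    by (intro add_mono Cauchy_Schwarz_ineq2)
  finally show ?thesis by simp
qed

lemma cscale_1[simp]: "cscale J 1 x = x" by (simp add: cscale_def)
lemma cscale_0[simp]: "cscale J 0 x = 0" by (simp add: cscale_def)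
lemma cscale_mult: "cscale J a (cscale J b x) = cscale J (a * b) x"
  by (simp add: cscale_def J_add J_scale algebra_simps scaleR_add_left scaleR_diff_left)

lemma clinear_cscale: "bounded_clinear J f \<Longrightarrow> f (cscale J c x) = cscale J c (f x)"
  unfolding bounded_clinear_def cscale_def
  by (simp add: linear_add[OF bounded_linear.linear] linear_cmul[OF bounded_linear.linear])

lemma csub_cscale: "subspace K \<Longrightarrow> J ` K \<subseteq> K \<Longrightarrow> x \<in> K \<Longrightarrow> cscale J c x \<in> K"
  unfolding cscale_def by (intro subspace_add subspace_scale) auto

section \<open>Orbit\<close>

lemma \<alpha>_Orb: "\<alpha> \<in> Orb" using \<alpha> by (auto simp: Orb_def tail_equiv_def)

lemma Orb_inf: "\<beta> \<in> Orb \<Longrightarrow> \<beta> \<in> inf_words d" by (simp add: Orb_def)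

lemma Orb_shift_in: "j \<in> {1..d} \<Longrightarrow> \<beta> \<in> Orb \<Longrightarrow> shift_in j \<beta> \<in> Orb"
  unfolding Orb_def tail_equiv_iff
proof (clarsimp simp: inf_words_shift_in)
  fix m n assume "\<forall>i. \<beta> (i + m) = \<alpha> (i + n)"
  then have "\<forall>i. shift_in j \<beta> (i + Suc m) = \<alpha> (i + n)" by simp
  then show "\<exists>m n. \<forall>i. shift_in j \<beta> (i + m) = \<alpha> (i + n)" by blast
qed

lemma Orb_remove_first: "\<beta> \<in> Orb \<Longrightarrow> remove_first j \<beta> \<in> Orb"
  unfolding Orb_def tail_equiv_iff
proof (clarsimp simp: inf_words_remove_first)
  fix m n assume h: "\<forall>i. \<beta> (i + m) = \<alpha> (i + n)"
  have "\<forall>i. remove_first j \<beta> (i + (m + first_occ j \<beta>)) = \<alpha> (i + (Suc n + first_occ j \<beta>))"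
  proof
    fix i
    have "remove_first j \<beta> (i + (m + first_occ j \<beta>)) = \<beta> (Suc (i + (m + first_occ j \<beta>)))"
      by (simp add: remove_first_def)
    also have "Suc (i + (m + first_occ j \<beta>)) = (Suc i + first_occ j \<beta>) + m" by simp
    also have "\<beta> ((Suc i + first_occ j \<beta>) + m) = \<alpha> ((Suc i + first_occ j \<beta>) + n)" using h by blast
    also have "(Suc i + first_occ j \<beta>) + n = i + (Suc n + first_occ j \<beta>)" by simp
    finally show "remove_first j \<beta> (i + (m + first_occ j \<beta>)) = \<alpha> (i + (Suc n + first_occ j \<beta>))" .
  qed
  then show "\<exists>m n. \<forall>i. remove_first j \<beta> (i + m) = \<alpha> (i + n)" by blast
qed

lemma Orb_funpow: "\<beta> \<in> Orb \<Longrightarrow> (shift ^^ k) \<beta> \<in> Orb"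
  unfolding Orb_def tail_equiv_iff
proof (clarsimp simp: inf_words_funpow)
  fix m n assume h: "\<forall>i. \<beta> (i + m) = \<alpha> (i + n)"
  have "\<forall>i. (shift ^^ k) \<beta> (i + m) = \<alpha> (i + (n + k))"
    using h by (simp add: funpow_shift) (metis add.assoc add.commute)
  then show "\<exists>m n. \<forall>i. (shift ^^ k) \<beta> (i + m) = \<alpha> (i + n)" by blast
qed

lemma Orb_pb: "\<gamma> \<in> Orb \<Longrightarrow> pb w \<gamma> k \<in> Orb"
  by (induction k) (auto simp: Orb_remove_first)

lemma alpha_letter: "\<alpha> n \<in> {1..d}" using \<alpha> by (simp add: inf_words_def)

lemma dense_univ:
  assumes "subspace P" "closed P" "\<And>\<gamma>. \<gamma> \<in> Orb \<Longrightarrow> e \<gamma> \<in> P" "\<And>\<gamma>. \<gamma> \<in> Orb \<Longrightarrow> J (e \<gamma>) \<in> P"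
  shows "P = UNIV"
proof -
  have "cspan J (e ` Orb) \<subseteq> P" unfolding cspan_def
    using assms by (intro span_minimal) auto
  then have "closure (cspan J (e ` Orb)) \<subseteq> P" using assms(2) by (rule closure_minimal)
  then show ?thesis using e_dense unfolding Orb_def by auto
qed

lemma e_norm: "\<gamma> \<in> Orb \<Longrightarrow> inner (e \<gamma>) (e \<gamma>) = 1"
  using e_inner[of \<gamma> \<gamma>] qinf_self[of \<gamma>]
  by (metis Orb_def cinner_Re mem_Collect_eq one_complex.simps(1))

lemma e_norm1: "\<gamma> \<in> Orb \<Longrightarrow> norm (e \<gamma>) = 1"
  using e_norm by (simp add: norm_eq_sqrt_inner)

lemma cinner_ee: "\<beta> \<in> Orb \<Longrightarrow> \<gamma> \<in> Orb \<Longrightarrow> cinner J (e \<beta>) (e \<gamma>) = qinf qq \<gamma> \<beta>"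
  using e_inner by (simp add: Orb_def)

lemma S_e': "j \<in> {1..d} \<Longrightarrow> \<beta> \<in> Orb \<Longrightarrow> S j (e \<beta>) = e (shift_in j \<beta>)"
  using S_e by (simp add: Orb_def)
lemma T_e': "j \<in> {1..d} \<Longrightarrow> \<beta> \<in> Orb \<Longrightarrow> T j (e \<beta>) = (if contains j \<beta>
       then cscale J (qone_inf qq j \<beta>) (e (remove_first j \<beta>)) else 0)"
  using T_e by (simp add: Orb_def)

lemma S_bl: "j \<in> {1..d} \<Longrightarrow> bounded_linear (S j)" using S_lin by (simp add: bounded_clinear_def)
lemma T_bl: "j \<in> {1..d} \<Longrightarrow> bounded_linear (T j)" using T_lin by (simp add: bounded_clinear_def)
lemma S_J: "j \<in> {1..d} \<Longrightarrow> S j (J x) = J (S j x)" using S_lin by (simp add: bounded_clinear_def)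
lemma T_J: "j \<in> {1..d} \<Longrightarrow> T j (J x) = J (T j x)" using T_lin by (simp add: bounded_clinear_def)

section \<open>Adjointness\<close>

lemma adj_e:
  assumes j: "j \<in> {1..d}" and b: "\<beta> \<in> Orb" and g: "\<gamma> \<in> Orb"
  shows "cinner J (T j (e \<beta>)) (e \<gamma>) = cinner J (e \<beta>) (S j (e \<gamma>))"
proof -
  have "cinner J (e \<beta>) (S j (e \<gamma>)) = qinf qq (shift_in j \<gamma>) \<beta>"
    using S_e'[OF j g] cinner_ee[OF b Orb_shift_in[OF j g]] by simp
  also have "\<dots> = (if contains j \<beta> then qone_inf qq j \<beta> * qinf qq \<gamma> (remove_first j \<beta>) else 0)"
    by (rule qinf_shift_in[OF Orb_inf[OF g] Orb_inf[OF b]])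
  also have "\<dots> = cinner J (T j (e \<beta>)) (e \<gamma>)"
    using T_e'[OF j b] cinner_ee[OF Orb_remove_first[OF b] g] by (simp add: cinner_cscale_left)
  finally show ?thesis by simp
qed

lemma adj:
  assumes j: "j \<in> {1..d}"
  shows "inner (T j x) y = inner x (S j y)"
proof -
  have BS: "bounded_linear (S j)" and BT: "bounded_linear (T j)" using S_bl T_bl j by auto
  have step2: "inner (T j (e \<beta>)) y = inner (e \<beta>) (S j y)" if b: "\<beta> \<in> Orb" for \<beta> y
  proof -
    let ?P = "{y. inner (T j (e \<beta>)) y = inner (e \<beta>) (S j y)}"
    have bl1: "bounded_linear (\<lambda>y. inner (T j (e \<beta>)) y)" by (rule bounded_linear_inner_right)
    have bl2: "bounded_linear (\<lambda>y. inner (e \<beta>) (S j y))"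
      using bounded_linear_compose[OF bounded_linear_inner_right BS] by (simp add: o_def)
    have "?P = UNIV"
    proof (rule dense_univ[OF eq_closed_subspace[OF bl1 bl2]])
      fix \<gamma> assume g: "\<gamma> \<in> Orb"
      have c: "cinner J (T j (e \<beta>)) (e \<gamma>) = cinner J (e \<beta>) (S j (e \<gamma>))" by (rule adj_e[OF j b g])
      show "e \<gamma> \<in> ?P" using arg_cong[OF c, of Re] by simp
      show "J (e \<gamma>) \<in> ?P" using arg_cong[OF c, of Im] by (simp add: S_J[OF j])
    qed
    then show ?thesis by auto
  qed
  have step3: "inner (T j (J (e \<beta>))) y = inner (J (e \<beta>)) (S j y)" if b: "\<beta> \<in> Orb" for \<beta> y
  proof -
    have "inner (T j (J (e \<beta>))) y = inner (J (T j (e \<beta>))) y" by (simp add: T_J[OF j])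
    also have "\<dots> = - inner (T j (e \<beta>)) (J y)" by (rule J_inner_left)
    also have "\<dots> = - inner (e \<beta>) (S j (J y))" using step2[OF b] by simp
    also have "\<dots> = - inner (e \<beta>) (J (S j y))" by (simp add: S_J[OF j])
    also have "\<dots> = inner (J (e \<beta>)) (S j y)" by (simp add: J_inner_left)
    finally show ?thesis .
  qed
  let ?P = "{x. inner (T j x) y = inner x (S j y)}"
  have bl1: "bounded_linear (\<lambda>x. inner (T j x) y)"
    using bounded_linear_compose[OF bounded_linear_inner_left BT] by (simp add: o_def)
  have bl2: "bounded_linear (\<lambda>x. inner x (S j y))" by (rule bounded_linear_inner_left)
  have "?P = UNIV"
    by (rule dense_univ[OF eq_closed_subspace[OF bl1 bl2]]) (auto intro: step2 step3)
  then show ?thesis by auto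
qed

end



context H
begin

primrec Tw :: "nat \<Rightarrow> 'h \<Rightarrow> 'h" where
  "Tw 0 = id"
| "Tw (Suc n) = T (\<alpha> n) \<circ> Tw n"

primrec Sw :: "nat \<Rightarrow> 'h \<Rightarrow> 'h" where
  "Sw 0 = id"
| "Sw (Suc n) = Sw n \<circ> S (\<alpha> n)"

lemma cscale_zero[simp]: "cscale J c 0 = 0" by (simp add: cscale_def)

lemma Tw_cl: "bounded_clinear J (Tw n)"
proof (induction n)
  case 0 show ?case by (simp add: bounded_clinear_def bounded_linear_ident id_def)
next
  case (Suc n)
  have "bounded_linear (\<lambda>x. T (\<alpha> n) (Tw n x))"
    using Suc T_bl[OF alpha_letter] by (intro bounded_linear_compose[of "T (\<alpha> n)" "Tw n"]) (auto simp: bounded_clinear_def)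
  then show ?case using Suc T_J[OF alpha_letter] by (simp add: bounded_clinear_def o_def)
qed

lemma Sw_cl: "bounded_clinear J (Sw n)"
proof (induction n)
  case 0 show ?case by (simp add: bounded_clinear_def bounded_linear_ident id_def)
next
  case (Suc n)
  have "bounded_linear (\<lambda>x. Sw n (S (\<alpha> n) x))"
    using Suc S_bl[OF alpha_letter] by (intro bounded_linear_compose[of "Sw n" "S (\<alpha> n)"]) (auto simp: bounded_clinear_def)
  then show ?case using Suc S_J[OF alpha_letter] by (simp add: bounded_clinear_def o_def)
qed

lemma Tw_bl: "bounded_linear (Tw n)" using Tw_cl by (simp add: bounded_clinear_def)
lemma Sw_bl: "bounded_linear (Sw n)" using Sw_cl by (simp add: bounded_clinear_def)
lemma Tw_J: "Tw n (J x) = J (Tw n x)" using Tw_cl by (simp add: bounded_clinear_def)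
lemma Sw_J: "Sw n (J x) = J (Sw n x)" using Sw_cl by (simp add: bounded_clinear_def)

lemma Tw_adj: "inner (Tw n x) y = inner x (Sw n y)"
proof (induction n arbitrary: y)
  case 0 show ?case by simp
next
  case (Suc n)
  have "inner (Tw (Suc n) x) y = inner (Tw n x) (S (\<alpha> n) y)" using adj[OF alpha_letter] by simp
  also have "\<dots> = inner x (Sw n (S (\<alpha> n) y))" by (rule Suc)
  finally show ?case by simp
qed

lemma Tw_e: "\<gamma> \<in> Orb \<Longrightarrow> Tw n (e \<gamma>) = cscale J (pc qq \<alpha> \<gamma> n) (e (pb \<alpha> \<gamma> n))"
proof (induction n)
  case 0 show ?case by simp
next
  case (Suc n)
  have b: "pb \<alpha> \<gamma> n \<in> Orb" using Orb_pb[OF Suc.prems] .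
  have "Tw (Suc n) (e \<gamma>) = T (\<alpha> n) (cscale J (pc qq \<alpha> \<gamma> n) (e (pb \<alpha> \<gamma> n)))" using Suc by simp
  also have "\<dots> = cscale J (pc qq \<alpha> \<gamma> n) (T (\<alpha> n) (e (pb \<alpha> \<gamma> n)))"
    by (rule clinear_cscale[OF T_lin[OF alpha_letter]])
  also have "\<dots> = cscale J (pc qq \<alpha> \<gamma> (Suc n)) (e (pb \<alpha> \<gamma> (Suc n)))"
    using T_e'[OF alpha_letter b] by (simp add: cscale_mult)
  finally show ?case .
qed

definition app :: "nat \<Rightarrow> (nat \<Rightarrow> nat) \<Rightarrow> (nat \<Rightarrow> nat)" where
  "app n \<delta> = (\<lambda>i. if i < n then \<alpha> i else \<delta> (i - n))"

lemma app_Suc: "app n (shift_in (\<alpha> n) \<delta>) = app (Suc n) \<delta>"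
  unfolding app_def shift_in_def by (rule ext) (auto simp: less_Suc_eq)

lemma app_Orb: "\<delta> \<in> Orb \<Longrightarrow> app n \<delta> \<in> Orb"
proof (induction n arbitrary: \<delta>)
  case 0 then show ?case by (simp add: app_def)
next
  case (Suc n)
  show ?case using Suc.IH[OF Orb_shift_in[OF alpha_letter[of n] Suc.prems]] by (simp add: app_Suc)
qed

lemma Sw_e: "\<delta> \<in> Orb \<Longrightarrow> Sw n (e \<delta>) = e (app n \<delta>)"
proof (induction n arbitrary: \<delta>)
  case 0 show ?case by (simp add: app_def)
next
  case (Suc n)
  have "Sw (Suc n) (e \<delta>) = Sw n (e (shift_in (\<alpha> n) \<delta>))" using S_e'[OF alpha_letter Suc.prems] by simp
  also have "\<dots> = e (app n (shift_in (\<alpha> n) \<delta>))" by (rule Suc.IH[OF Orb_shift_in[OF alpha_letter Suc.prems]])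
  finally show ?case by (simp add: app_Suc)
qed

lemma app_alpha: "app n ((shift ^^ n) \<alpha>) = \<alpha>"
  unfolding app_def funpow_shift by (rule ext) auto

lemma pb_alpha: "pb \<alpha> \<alpha> n = (shift ^^ n) \<alpha> \<and> pc qq \<alpha> \<alpha> n = 1"
proof (induction n)
  case 0 show ?case by simp
next
  case (Suc n)
  have h: "(shift ^^ n) \<alpha> 0 = \<alpha> n" by (simp add: funpow_shift)
  have c: "contains (\<alpha> n) ((shift ^^ n) \<alpha>)" using h unfolding contains_def by blast
  show ?case using Suc h c by (simp add: remove_first_0 qone_inf_0)
qed

lemma Tw_alpha: "Tw n (e \<alpha>) = e ((shift ^^ n) \<alpha>)"
  using Tw_e[OF \<alpha>_Orb, of n] pb_alpha[of n] by simp

lemma V_alpha: "Sw n (Tw n (e \<alpha>)) = e \<alpha>"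
  using Tw_e[OF \<alpha>_Orb, of n] pb_alpha[of n] Sw_e[OF Orb_funpow[OF \<alpha>_Orb], of n n] app_alpha[of n]
  by simp

lemma V_sym: "cinner J (Sw n (Tw n y)) z = cinner J y (Sw n (Tw n z))"
proof -
  have r: "inner (Sw n (Tw n y)) z = inner y (Sw n (Tw n z))"
    by (simp add: Tw_adj[symmetric] inner_commute)
  have i1: "inner (Sw n (Tw n y)) (J z) = inner (J (Tw n z)) (Tw n y)"
    by (simp add: inner_commute[of "Sw n (Tw n y)"] Tw_adj[symmetric] Tw_J)
  have i2: "inner y (J (Sw n (Tw n z))) = inner (Tw n y) (J (Tw n z))"
    by (simp add: Sw_J[symmetric] Tw_adj[symmetric])
  have i: "inner (Sw n (Tw n y)) (J z) = inner y (J (Sw n (Tw n z)))"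
    using i1 i2 by (simp add: inner_commute)
  show ?thesis using r i by (simp add: complex_eq_iff)
qed

lemma fixed_formula:
  assumes hfix: "\<And>n. Sw n (Tw n y) = y" and g: "\<gamma> \<in> Orb"
  shows "cinner J y (e \<gamma>) = cnj (pc qq \<alpha> \<gamma> n) * cinner J y (e (app n (pb \<alpha> \<gamma> n)))"
proof -
  have "cinner J y (e \<gamma>) = cinner J (Sw n (Tw n y)) (e \<gamma>)" using hfix by simp
  also have "\<dots> = cinner J y (Sw n (Tw n (e \<gamma>)))" by (rule V_sym)
  also have "Sw n (Tw n (e \<gamma>)) = cscale J (pc qq \<alpha> \<gamma> n) (e (app n (pb \<alpha> \<gamma> n)))"
    using Tw_e[OF g, of n] clinear_cscale[OF Sw_cl] Sw_e[OF Orb_pb[OF g]] by simp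
  finally show ?thesis by (simp add: cinner_cscale_right)
qed

lemma key:
  assumes hfix: "\<And>n. Sw n (Tw n y) = y" and g: "\<gamma> \<in> Orb"
  shows "cinner J y (e \<gamma>) = cinner J y (e \<alpha>) * cinner J (e \<alpha>) (e \<gamma>)"
proof -
  have fixa: "\<And>n. Sw n (Tw n (e \<alpha>)) = e \<alpha>" by (rule V_alpha)
  have aa: "cinner J (e \<alpha>) (e \<alpha>) = 1" using cinner_ee[OF \<alpha>_Orb \<alpha>_Orb] qinf_self by simp
  from dichotomy[OF \<alpha> Orb_inf[OF g]] show ?thesis
  proof
    assume "\<exists>N. pb \<alpha> \<gamma> N = (shift ^^ N) \<alpha> \<and> (\<forall>k\<ge>N. pc qq \<alpha> \<gamma> k = pc qq \<alpha> \<gamma> N)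
              \<and> (\<forall>k\<ge>N. contains (\<alpha> k) (pb \<alpha> \<gamma> k) \<and> first_occ (\<alpha> k) (pb \<alpha> \<gamma> k) = 0)"
    then obtain N where N: "pb \<alpha> \<gamma> N = (shift ^^ N) \<alpha>" by blast
    have 1: "cinner J y (e \<gamma>) = cnj (pc qq \<alpha> \<gamma> N) * cinner J y (e \<alpha>)"
      using fixed_formula[OF hfix g, of N] N app_alpha by simp
    have 2: "cinner J (e \<alpha>) (e \<gamma>) = cnj (pc qq \<alpha> \<gamma> N)"
      using fixed_formula[OF fixa g, of N] N app_alpha aa by simp
    show ?thesis using 1 2 by simp
  next
    assume lim: "pc qq \<alpha> \<gamma> \<longlonglongrightarrow> 0"
    have zero: "cinner J y' (e \<gamma>) = 0" if hfix': "\<And>n. Sw n (Tw n y') = y'" for y'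
    proof -
      have "cmod (cinner J y' (e \<gamma>)) \<le> cmod (pc qq \<alpha> \<gamma> n) * (2 * norm y')" for n
      proof -
        have "cmod (cinner J y' (e \<gamma>)) = cmod (pc qq \<alpha> \<gamma> n) * cmod (cinner J y' (e (app n (pb \<alpha> \<gamma> n))))"
          using fixed_formula[OF hfix' g, of n] by (simp add: norm_mult)
        also have "\<dots> \<le> cmod (pc qq \<alpha> \<gamma> n) * (2 * norm y')"
        proof (rule mult_left_mono)
          show "cmod (cinner J y' (e (app n (pb \<alpha> \<gamma> n)))) \<le> 2 * norm y'"
            using cmod_cinner[of y' "e (app n (pb \<alpha> \<gamma> n))"] e_norm1[OF app_Orb[OF Orb_pb[OF g]]] by simp
        qed simp
        finally show ?thesis .
      qed
      moreover have "(\<lambda>n. cmod (pc qq \<alpha> \<gamma> n) * (2 * norm y')) \<longlonglongrightarrow> 0 * (2 * norm y')"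
        by (intro tendsto_mult tendsto_const) (simp add: tendsto_norm_zero lim)
      ultimately have "cmod (cinner J y' (e \<gamma>)) \<le> 0"
        by (intro LIMSEQ_le_const[where X="\<lambda>n. cmod (pc qq \<alpha> \<gamma> n) * (2 * norm y')"]) auto
      then show ?thesis by simp
    qed
    show ?thesis using zero[OF hfix] zero[OF fixa] by simp
  qed
qed

lemma fixed_is_multiple:
  assumes hfix: "\<And>n. Sw n (Tw n y) = y"
  shows "y = cscale J (cinner J y (e \<alpha>)) (e \<alpha>)"
proof -
  define z where "z = y - cscale J (cinner J y (e \<alpha>)) (e \<alpha>)"
  have cz: "cinner J z (e \<gamma>) = 0" if g: "\<gamma> \<in> Orb" for \<gamma>
    unfolding z_def using key[OF hfix g] by (simp add: cinner_diff_left cinner_cscale_left)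
  let ?P = "{w. inner z w = (\<lambda>_. 0) w}"
  have bl: "bounded_linear (\<lambda>w. inner z w)" by (rule bounded_linear_inner_right)
  have "?P = UNIV"
  proof (rule dense_univ[OF eq_closed_subspace[OF bl bounded_linear_zero]])
    fix \<gamma> assume g: "\<gamma> \<in> Orb"
    show "e \<gamma> \<in> ?P" using arg_cong[OF cz[OF g], of Re] by simp
    show "J (e \<gamma>) \<in> ?P" using arg_cong[OF cz[OF g], of Im] by simp
  qed
  then have "z \<in> ?P" by blast
  then have "inner z z = 0" by simp
  then have "z = 0" by simp
  then show ?thesis unfolding z_def by simp
qed

lemma Tw_maps: "(\<And>j. j \<in> {1..d} \<Longrightarrow> T j ` M \<subseteq> M) \<Longrightarrow> x \<in> M \<Longrightarrow> Tw n x \<in> M"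
proof (induction n)
  case 0 then show ?case by simp
next
  case (Suc n)
  have "T (\<alpha> n) (Tw n x) \<in> M" using Suc.prems(1)[OF alpha_letter[of n]] Suc.IH[OF Suc.prems] by blast
  then show ?case by simp
qed

lemma Sw_maps: "(\<And>j. j \<in> {1..d} \<Longrightarrow> S j ` M \<subseteq> M) \<Longrightarrow> x \<in> M \<Longrightarrow> Sw n x \<in> M"
proof (induction n arbitrary: x)
  case 0 then show ?case by simp
next
  case (Suc n)
  have "S (\<alpha> n) x \<in> M" using Suc.prems alpha_letter by blast
  then show ?case using Suc.IH[OF Suc.prems(1)] by simp
qed

lemma gen_univ:
  assumes sub: "subspace M" and cl: "closed M" and JM: "J ` M \<subseteq> M"
    and SM: "\<And>j. j \<in> {1..d} \<Longrightarrow> S j ` M \<subseteq> M" and TM: "\<And>j. j \<in> {1..d} \<Longrightarrow> T j ` M \<subseteq> M"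
    and a: "e \<alpha> \<in> M"
  shows "M = UNIV"
proof -
  have sa: "e ((shift ^^ n) \<alpha>) \<in> M" for n
    using Tw_maps[OF TM a, of n] unfolding Tw_alpha .
  have eg: "e \<gamma> \<in> M" if g: "\<gamma> \<in> Orb" for \<gamma>
  proof -
    obtain m n where mn: "(shift ^^ m) \<gamma> = (shift ^^ n) \<alpha>"
      using g unfolding Orb_def tail_equiv_def by blast
    have "e ((shift ^^ k) \<gamma>) \<in> M" if "k \<le> m" for k
      using that
    proof (induction k rule: inc_induct)
      case base show ?case unfolding mn by (rule sa)
    next
      case (step k)
      have gk: "\<gamma> k \<in> {1..d}" using g unfolding Orb_def inf_words_def by blast
      have eq: "shift_in (\<gamma> k) ((shift ^^ Suc k) \<gamma>) = (shift ^^ k) \<gamma>"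
        unfolding funpow_shift shift_in_def
      proof (rule ext)
        fix i show "(if i = 0 then \<gamma> k else \<gamma> (i - 1 + Suc k)) = \<gamma> (i + k)"
          by (cases i) auto
      qed
      have "S (\<gamma> k) (e ((shift ^^ Suc k) \<gamma>)) = e (shift_in (\<gamma> k) ((shift ^^ Suc k) \<gamma>))"
        by (rule S_e'[OF gk Orb_funpow[OF g]])
      also have "\<dots> = e ((shift ^^ k) \<gamma>)" by (rule arg_cong[where f=e, OF eq])
      finally have "S (\<gamma> k) (e ((shift ^^ Suc k) \<gamma>)) = e ((shift ^^ k) \<gamma>)" .
      moreover have "\<forall>x\<in>M. S (\<gamma> k) x \<in> M" using SM[OF gk] by (simp add: image_subset_iff)
      ultimately show ?case using step.IH by metis
    qed
    from this[of 0] show ?thesis by (simp only: funpow_0 le0)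
  qed
  show ?thesis
  proof (rule dense_univ[OF sub cl])
    fix \<gamma> assume "\<gamma> \<in> Orb"
    then show "e \<gamma> \<in> M" by (rule eg)
    then show "J (e \<gamma>) \<in> M" using JM by blast
  qed
qed

theorem H_irreducible:
  "\<forall>K. closed_csubspace J K \<and> (\<forall>j\<in>{1..d}. S j ` K \<subseteq> K \<and> T j ` K \<subseteq> K)
             \<longrightarrow> K = {0} \<or> K = UNIV"
proof (intro allI impI)
  fix K assume "closed_csubspace J K \<and> (\<forall>j\<in>{1..d}. S j ` K \<subseteq> K \<and> T j ` K \<subseteq> K)"
  then have sub: "subspace K" and cl: "closed K" and JK: "J ` K \<subseteq> K"
    and SK: "\<And>j. j \<in> {1..d} \<Longrightarrow> S j ` K \<subseteq> K" and TK: "\<And>j. j \<in> {1..d} \<Longrightarrow> T j ` K \<subseteq> K"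
    by (auto simp: closed_csubspace_def)
  define Kp where "Kp = {y. \<forall>k\<in>K. inner k y = 0}"
  have subp: "subspace Kp" unfolding Kp_def subspace_def by (simp add: inner_add_right)
  have "Kp = (\<Inter>k\<in>K. {y. inner k y = 0})" unfolding Kp_def by auto
  then have clp: "closed Kp"
    by (simp add: closed_INT closed_Collect_eq continuous_on_inner continuous_on_const continuous_on_id)
  have JKp: "J ` Kp \<subseteq> Kp"
  proof
    fix x assume "x \<in> J ` Kp"
    then obtain y where y: "y \<in> Kp" "x = J y" by auto
    have "inner k (J y) = 0" if "k \<in> K" for k
    proof -
      have "inner k (J y) = - inner (J k) y" using J_inner_left[of k y] by simp
      also have "J k \<in> K" using JK that by auto
      then have "inner (J k) y = 0" using y(1) unfolding Kp_def by auto
      finally show ?thesis by simp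
    qed
    then show "x \<in> Kp" using y unfolding Kp_def by auto
  qed
  have SKp: "S j ` Kp \<subseteq> Kp" if j: "j \<in> {1..d}" for j
  proof
    fix x assume "x \<in> S j ` Kp"
    then obtain y where y: "y \<in> Kp" "x = S j y" by auto
    have "inner k (S j y) = 0" if "k \<in> K" for k
    proof -
      have "inner k (S j y) = inner (T j k) y" using adj[OF j] by simp
      moreover have "T j k \<in> K" using TK[OF j] that by auto
      ultimately show ?thesis using y(1) unfolding Kp_def by auto
    qed
    then show "x \<in> Kp" using y unfolding Kp_def by auto
  qed
  have TKp: "T j ` Kp \<subseteq> Kp" if j: "j \<in> {1..d}" for j
  proof
    fix x assume "x \<in> T j ` Kp"
    then obtain y where y: "y \<in> Kp" "x = T j y" by auto
    have "inner k (T j y) = 0" if "k \<in> K" for k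
    proof -
      have "inner k (T j y) = inner (S j k) y" using adj[OF j, of y k] by (simp add: inner_commute)
      moreover have "S j k \<in> K" using SK[OF j] that by auto
      ultimately show ?thesis using y(1) unfolding Kp_def by auto
    qed
    then show "x \<in> Kp" using y unfolding Kp_def by auto
  qed
  have inter: "x = 0" if "x \<in> K" "x \<in> Kp" for x
    using that unfolding Kp_def by auto
  obtain a where aK: "a \<in> K" and ao: "\<forall>k\<in>K. inner (e \<alpha> - a) k = 0"
    using proj_exists[OF sub cl, of "e \<alpha>"] by blast
  define b where "b = e \<alpha> - a"
  have bKp: "b \<in> Kp" using ao unfolding b_def Kp_def by (simp add: inner_commute)
  have fixa: "Sw n (Tw n a) = a" for n
  proof -
    have VaK: "Sw n (Tw n a) \<in> K" using Sw_maps[OF SK Tw_maps[OF TK aK]] .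
    have VbKp: "Sw n (Tw n b) \<in> Kp" using Sw_maps[OF SKp Tw_maps[OF TKp bKp]] .
    have lin: "Sw n (Tw n (a + b)) = Sw n (Tw n a) + Sw n (Tw n b)"
      using linear_add[OF bounded_linear.linear[OF Tw_bl]] linear_add[OF bounded_linear.linear[OF Sw_bl]] by simp
    have "a + b = e \<alpha>" unfolding b_def by simp
    then have "Sw n (Tw n a) + Sw n (Tw n b) = a + b" using lin V_alpha by simp
    then have eq: "Sw n (Tw n a) - a = b - Sw n (Tw n b)" by (simp add: algebra_simps)
    have "Sw n (Tw n a) - a \<in> K" using VaK aK sub by (simp add: subspace_diff)
    moreover have "b - Sw n (Tw n b) \<in> Kp" using VbKp bKp subp by (simp add: subspace_diff)
    ultimately have "Sw n (Tw n a) - a = 0" using inter eq by metis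
    then show ?thesis by simp
  qed
  define c where "c = cinner J a (e \<alpha>)"
  have ac: "a = cscale J c (e \<alpha>)" unfolding c_def by (rule fixed_is_multiple[OF fixa])
  show "K = {0} \<or> K = UNIV"
  proof (cases "c = 0")
    case False
    have "cscale J (inverse c) a = e \<alpha>" using False by (simp add: ac cscale_mult)
    moreover have "cscale J (inverse c) a \<in> K" by (rule csub_cscale[OF sub JK aK])
    ultimately have "e \<alpha> \<in> K" by simp
    from gen_univ[OF sub cl JK SK TK this] have "K = UNIV" .
    then show ?thesis by simp
  next
    case True
    then have "a = 0" using ac by simp
    then have "e \<alpha> \<in> Kp" using bKp unfolding b_def by simp
    from gen_univ[OF subp clp JKp SKp TKp this] have "Kp = UNIV" .
    then have "\<forall>k\<in>K. k = 0" using inter by auto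
    moreover have "0 \<in> K" using sub by (simp add: subspace_0)
    ultimately show ?thesis by auto
  qed
qed

end


theorem mainTheorem4:
  fixes d :: nat and qq :: "nat \<Rightarrow> nat \<Rightarrow> complex"
    and \<alpha> :: "nat \<Rightarrow> nat"
    and J :: "'h::{real_inner,complete_space} \<Rightarrow> 'h"
    and e :: "(nat \<Rightarrow> nat) \<Rightarrow> 'h"
    and S T :: "nat \<Rightarrow> 'h \<Rightarrow> 'h"
  assumes d: "d \<ge> 2"
    and q_small: "\<And>i j. i \<in> {1..d} \<Longrightarrow> j \<in> {1..d} \<Longrightarrow> i \<noteq> j \<Longrightarrow> cmod (qq i j) < 1"
    and q_conj: "\<And>i j. i \<in> {1..d} \<Longrightarrow> j \<in> {1..d} \<Longrightarrow> i \<noteq> j \<Longrightarrow> qq i j = cnj (qq j i)"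
    and \<alpha>: "\<alpha> \<in> inf_words d"
    \<comment> \<open>H_\<alpha>: a complex Hilbert space with vectors e_\<beta> (\<beta> \<sim> \<alpha>) spanning a dense subspace,
        with (e_\<beta>, e_\<gamma>) = q(\<gamma>,\<beta>)\<close>
    and J: "complex_structure J"
    and e_inner: "\<And>\<beta> \<gamma>. \<beta> \<in> inf_words d \<Longrightarrow> tail_equiv \<beta> \<alpha> \<Longrightarrow>
                    \<gamma> \<in> inf_words d \<Longrightarrow> tail_equiv \<gamma> \<alpha> \<Longrightarrow>
                    cinner J (e \<beta>) (e \<gamma>) = qinf qq \<gamma> \<beta>"
    and e_dense: "closure (cspan J (e ` {\<beta> \<in> inf_words d. tail_equiv \<beta> \<alpha>})) = UNIV"
    \<comment> \<open>S j = \<pi>_\<alpha>(s_j) and T j = \<pi>_\<alpha>(s_j)^*, bounded operators on H_\<alpha>\<close>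
    and S_lin: "\<And>j. j \<in> {1..d} \<Longrightarrow> bounded_clinear J (S j)"
    and T_lin: "\<And>j. j \<in> {1..d} \<Longrightarrow> bounded_clinear J (T j)"
    and S_e: "\<And>j \<beta>. j \<in> {1..d} \<Longrightarrow> \<beta> \<in> inf_words d \<Longrightarrow> tail_equiv \<beta> \<alpha> \<Longrightarrow>
                S j (e \<beta>) = e (shift_in j \<beta>)"
    and T_e: "\<And>j \<beta>. j \<in> {1..d} \<Longrightarrow> \<beta> \<in> inf_words d \<Longrightarrow> tail_equiv \<beta> \<alpha> \<Longrightarrow>
                T j (e \<beta>) = (if contains j \<beta>
                              then cscale J (qone_inf qq j \<beta>) (e (remove_first j \<beta>))
                              else 0)"
  shows "\<forall>K. closed_csubspace J K \<and> (\<forall>j\<in>{1..d}. S j ` K \<subseteq> K \<and> T j ` K \<subseteq> K)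
             \<longrightarrow> K = {0} \<or> K = UNIV"
proof -
  interpret H d qq \<alpha> J e S T
  proof (unfold_locales)
    show "2 \<le> d" by (rule d)
  qed (fact q_small \<alpha> J e_inner e_dense S_lin T_lin S_e T_e)+
  show ?thesis by (rule H_irreducible)
qed

end
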